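(* Let $G$ be a finite simple graph on $n$ vertices with at least one edge, let $\lambda_1$ and $\lambda_n$ be the largest and smallest eigenvalues of its (0/1) adjacency matrix, let $P_{\lambda_1}$ be the orthogonal projection onto the $\lambda_1$-eigenspace, and put $p=\langle\boldsymbol 1,P_{\lambda_1}\boldsymbol 1\rangle$. If $\frac{-\lambda_n(n-p)}{\lambda_1 p}\le 1$, then $$\vartheta(G)\le\frac{-n\lambda_n}{\lambda_1-\lambda_n}\cdot\frac{p}{n}\left(1+\sqrt{\frac{\lambda_1(n-p)}{-\lambda_n\,p}}\right)^2.$$
   Context: $\boldsymbol 1$ is the all-ones vector and $\langle\cdot,\cdot\rangle$ the standard inner product. $\vartheta(G)$ is the Lovász theta function, $\vartheta(G)=\inf_B\lambda_{\max}(B)$ over real symmetric $B$ with $B_{ij}=1$ whenever $i=j$ or $i,j$ are non-adjacent. *)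

theory Defs
  imports "HOL-Analysis.Analysis"
begin

text \<open>Simple graphs on the finite vertex type 'n: a symmetric irreflexive relation E.\<close>

definition adj_matrix :: "('n::finite \<Rightarrow> 'n \<Rightarrow> bool) \<Rightarrow> real^'n^'n" where
  "adj_matrix E = (\<chi> i j. if E i j then 1 else 0)"

definition is_eigenvalue :: "real^'n^'n \<Rightarrow> real \<Rightarrow> bool" where
  "is_eigenvalue A \<mu> \<longleftrightarrow> (\<exists>v. v \<noteq> 0 \<and> A *v v = \<mu> *\<^sub>R v)"

definition lambda_max :: "real^'n^'n \<Rightarrow> real" where
  "lambda_max A = Max {\<mu>. is_eigenvalue A \<mu>}"

definition lambda_min :: "real^'n^'n \<Rightarrow> real" where
  "lambda_min A = Min {\<mu>. is_eigenvalue A \<mu>}"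

definition eigenspace :: "real^'n^'n \<Rightarrow> real \<Rightarrow> (real^'n) set" where
  "eigenspace A \<mu> = {v. A *v v = \<mu> *\<^sub>R v}"

definition orth_proj :: "'a::real_inner set \<Rightarrow> 'a \<Rightarrow> 'a" where
  "orth_proj S x = (THE w. w \<in> S \<and> (\<forall>u\<in>S. inner (x - w) u = 0))"

definition lovasz_theta :: "('n::finite \<Rightarrow> 'n \<Rightarrow> bool) \<Rightarrow> real" where
  "lovasz_theta E = Inf (lambda_max ` {B :: real^'n^'n. transpose B = B \<and>
      (\<forall>i j. (i = j \<or> \<not> E i j) \<longrightarrow> B $ i $ j = 1)})"

end

theory Submission
  imports Defs
begin


lemma sym_inner:
  fixes B :: "real^'n^'n"
  assumes "transpose B = B"
  shows "inner (B *v x) y = inner x (B *v y)"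
  by (metis assms dot_lmul_matrix vector_transpose_matrix)

lemma quad_expand:
  fixes B :: "real^'n^'n"
  assumes "transpose B = B"
  shows "inner (x + e *\<^sub>R w) (B *v (x + e *\<^sub>R w)) - M * inner (x + e *\<^sub>R w) (x + e *\<^sub>R w)
     = (inner x (B *v x) - M * inner x x) + 2 * e * (inner w (B *v x) - M * inner w x)
       + e^2 * (inner w (B *v w) - M * inner w w)"
  using sym_inner[OF assms, of w x] inner_commute[of x "B *v w"]
  by (simp add: algebra_simps inner_add_left inner_add_right power2_eq_square inner_commute[of x w])

lemma maximizer_eigen:
  fixes B :: "real^'n^'n"
  assumes sy: "transpose B = B"
    and le: "\<And>x. inner x (B *v x) \<le> M * inner x x"
    and eq: "inner z (B *v z) = M * inner z z"
  shows "B *v z = M *\<^sub>R z"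
proof (rule ccontr)
  assume ne: "B *v z \<noteq> M *\<^sub>R z"
  define w where "w = B *v z - M *\<^sub>R z"
  have wz: "inner w (B *v z) - M * inner w z = inner w w"
    by (simp add: w_def inner_diff_right algebra_simps)
  have wpos: "inner w w > 0" using ne by (simp add: w_def)
  define c where "c = inner w (B *v w) - M * inner w w"
  have "\<And>e. 2 * e * inner w w + e^2 * c \<le> 0"
  proof -
    fix e :: real
    have "inner (z + e *\<^sub>R w) (B *v (z + e *\<^sub>R w)) - M * inner (z + e *\<^sub>R w) (z + e *\<^sub>R w) \<le> 0"
      using le[of "z + e *\<^sub>R w"] by simp
    then show "2 * e * inner w w + e^2 * c \<le> 0"
      using quad_expand[OF sy, of z e w M] eq wz by (simp add: c_def)
  qed
  from this[of "inner w w / (\<bar>c\<bar> + 1)"]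
  have h: "2 * (inner w w / (\<bar>c\<bar> + 1)) * inner w w + (inner w w / (\<bar>c\<bar> + 1))^2 * c \<le> 0" .
  define a where "a = inner w w"
  define d where "d = \<bar>c\<bar> + 1"
  have d: "d > 0" "c \<ge> - d + 1" unfolding d_def by auto
  have "2 * (a / d) * a + (a/d)^2 * c \<le> 0" using h unfolding a_def d_def .
  then have "(2 * a * a * d + a * a * c) / d^2 \<le> 0" using d by (simp add: field_simps power2_eq_square)
  then have "2 * a * a * d + a * a * c \<le> 0" using d by (simp add: divide_le_0_iff)
  moreover have "a * a * c \<ge> a * a * (- d + 1)" using d wpos unfolding a_def by (intro mult_left_mono) auto
  ultimately have "a * a * (d + 1) \<le> 0" by (simp add: algebra_simps)
  then show False using wpos d unfolding a_def by (smt (verit) mult_pos_pos)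
qed

lemma eig_finite:
  fixes B :: "real^'n^'n"
  assumes sy: "transpose B = B"
  shows "finite {\<mu>. is_eigenvalue B \<mu>}"
proof -
  define S where "S = {\<mu>. is_eigenvalue B \<mu>}"
  define f where "f \<mu> = (SOME v. v \<noteq> 0 \<and> B *v v = \<mu> *\<^sub>R v)" for \<mu>
  have f: "f \<mu> \<noteq> 0 \<and> B *v f \<mu> = \<mu> *\<^sub>R f \<mu>" if "\<mu> \<in> S" for \<mu>
    using that unfolding S_def is_eigenvalue_def f_def by (metis (mono_tags, lifting) someI_ex mem_Collect_eq)
  have inj: "inj_on f S"
  proof (rule inj_onI)
    fix a b assume ab: "a \<in> S" "b \<in> S" "f a = f b"
    have e1: "B *v f a = a *\<^sub>R f a" using f[OF ab(1)] by blast
    have e2: "B *v f b = b *\<^sub>R f b" using f[OF ab(2)] by blast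
    have "a *\<^sub>R f a = b *\<^sub>R f a" using e1 e2 ab(3) by metis
    moreover have "f a \<noteq> 0" using f[OF ab(1)] by blast
    ultimately show "a = b" by (simp add: scaleR_cancel_right)
  qed
  have orth: "inner (f a) (f b) = 0" if "a \<in> S" "b \<in> S" "a \<noteq> b" for a b
  proof -
    have "inner (B *v f a) (f b) = inner (f a) (B *v f b)" by (rule sym_inner[OF sy])
    then have "a * inner (f a) (f b) = b * inner (f a) (f b)"
      using f[OF that(1)] f[OF that(2)] by simp
    then show ?thesis using that(3) by simp
  qed
  have "pairwise orthogonal (f ` S)"
  proof (unfold pairwise_def, intro ballI impI)
    fix x y assume xy: "x \<in> f ` S" "y \<in> f ` S" "x \<noteq> y"
    then obtain a b where ab: "a \<in> S" "b \<in> S" "x = f a" "y = f b" by blast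
    then have "a \<noteq> b" using xy(3) by blast
    then show "orthogonal x y" unfolding orthogonal_def using orth ab by blast
  qed
  moreover have "0 \<notin> f ` S"
  proof
    assume "0 \<in> f ` S"
    then obtain a where "a \<in> S" "f a = 0" by (metis imageE)
    then show False using f by blast
  qed
  ultimately have "independent (f ` S)" by (rule pairwise_orthogonal_independent)
  then have "finite (f ` S)" by (rule independent_imp_finite)
  then show ?thesis using inj finite_imageD unfolding S_def by blast
qed

lemma sym_max:
  fixes B :: "real^'n^'n"
  assumes sy: "transpose B = B"
  shows "\<exists>v. norm v = 1 \<and> B *v v = lambda_max B *\<^sub>R v"
    and "\<And>x. inner x (B *v x) \<le> lambda_max B * inner x x"
proof -
  define f where "f x = inner x (B *v x)" for x :: "real^'n"
  have cont: "continuous_on (sphere 0 1) f"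
    unfolding f_def by (intro continuous_intros)
  have ne: "sphere (0::real^'n) 1 \<noteq> {}"
  proof -
    have "axis undefined 1 \<in> sphere (0::real^'n) 1" by (simp add: norm_axis_1)
    then show ?thesis by blast
  qed
  obtain v where v: "v \<in> sphere 0 1" "\<And>y. y \<in> sphere 0 1 \<Longrightarrow> f y \<le> f v"
    using continuous_attains_sup[OF compact_sphere ne cont] by blast
  define M where "M = f v"
  have le: "inner x (B *v x) \<le> M * inner x x" for x
  proof (cases "x = 0")
    case True then show ?thesis by simp
  next
    case False
    define u where "u = x /\<^sub>R norm x"
    have "u \<in> sphere 0 1" using False by (simp add: u_def)
    then have "f u \<le> M" using v M_def by simp
    moreover have "x = norm x *\<^sub>R u" using False by (simp add: u_def)
    then have "f x = (norm x)^2 * f u"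
      by (metis (no_types, lifting) f_def inner_scaleR_left inner_scaleR_right matrix_vector_mult_scaleR mult.assoc power2_eq_square)
    moreover have "inner x x = (norm x)^2" by (simp add: power2_norm_eq_inner)
    ultimately show ?thesis unfolding f_def
      by (metis mult.commute mult_left_mono zero_le_power2)
  qed
  have vv: "inner v v = 1" using v(1) by (simp add: norm_eq_1)
  have eig: "B *v v = M *\<^sub>R v"
    by (rule maximizer_eigen[OF sy le]) (simp add: vv M_def f_def)
  have Mev: "is_eigenvalue B M" unfolding is_eigenvalue_def using eig v(1) by (intro exI[of _ v]) auto
  have ub: "\<mu> \<le> M" if ev: "is_eigenvalue B \<mu>" for \<mu>
  proof -
    obtain u where u: "u \<noteq> 0" "B *v u = \<mu> *\<^sub>R u" using ev[unfolded is_eigenvalue_def] by auto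
    have "\<mu> * inner u u \<le> M * inner u u" using le[of u] u by simp
    then show ?thesis using u(1) by simp
  qed
  have lm: "lambda_max B = M"
    unfolding lambda_max_def using eig_finite[OF sy] Mev ub by (intro Max_eqI) auto
  show "\<exists>v. norm v = 1 \<and> B *v v = lambda_max B *\<^sub>R v" using eig v(1) lm by auto
  show "\<And>x. inner x (B *v x) \<le> lambda_max B * inner x x" using le lm by simp
qed

lemma neg_mv: fixes B :: "real^'n^'n" shows "(- B) *v x = - (B *v x)"
  by (simp add: vec_eq_iff matrix_vector_mult_def sum_negf)

lemma sym_min:
  fixes B :: "real^'n^'n"
  assumes sy: "transpose B = B"
  shows "\<exists>v. norm v = 1 \<and> B *v v = lambda_min B *\<^sub>R v"
    and "\<And>x. lambda_min B * inner x x \<le> inner x (B *v x)"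
proof -
  have syC: "transpose (- B) = - B" using sy by (simp add: transpose_def vec_eq_iff)
  define m where "m = - lambda_max (- B)"
  obtain v where v: "norm v = 1" "(- B) *v v = lambda_max (- B) *\<^sub>R v" using sym_max(1)[OF syC] by blast
  have Bv: "B *v v = m *\<^sub>R v" using v(2) unfolding neg_mv m_def by (metis minus_minus scaleR_minus_left)
  have ge: "m * inner x x \<le> inner x (B *v x)" for x
    using sym_max(2)[OF syC, of x] unfolding neg_mv m_def by simp
  have mev: "is_eigenvalue B m" unfolding is_eigenvalue_def using Bv v(1) by (intro exI[of _ v]) auto
  have lb: "m \<le> \<mu>" if ev: "is_eigenvalue B \<mu>" for \<mu>
  proof -
    obtain u where u: "u \<noteq> 0" "B *v u = \<mu> *\<^sub>R u" using ev[unfolded is_eigenvalue_def] by auto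
    have "m * inner u u \<le> \<mu> * inner u u" using ge[of u] u by simp
    then show ?thesis using u(1) by simp
  qed
  have lm: "lambda_min B = m"
    unfolding lambda_min_def using eig_finite[OF sy] mev lb by (intro Min_eqI) auto
  show "\<exists>v. norm v = 1 \<and> B *v v = lambda_min B *\<^sub>R v" using Bv v(1) lm by auto
  show "\<And>x. lambda_min B * inner x x \<le> inner x (B *v x)" using ge lm by simp
qed

lemma orth_proj_props:
  fixes S :: "(real^'n) set"
  assumes "subspace S"
  shows "orth_proj S x \<in> S" and "\<And>u. u \<in> S \<Longrightarrow> inner (x - orth_proj S x) u = 0"
proof -
  obtain y z where yz: "y \<in> span S" "\<And>w. w \<in> span S \<Longrightarrow> orthogonal z w" "x = y + z"
  proof (rule orthogonal_subspace_decomp_exists[of S x])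
    fix y z assume a: "y \<in> span S" "\<And>w. w \<in> span S \<Longrightarrow> orthogonal z w" "x = y + z"
    show thesis by (rule that[OF a])
  qed
  have sp: "span S = S" using assms by (simp add: span_eq_iff)
  have ex: "y \<in> S \<and> (\<forall>u\<in>S. inner (x - y) u = 0)"
    using yz sp by (auto simp: orthogonal_def)
  have uniq: "w = y" if w: "w \<in> S \<and> (\<forall>u\<in>S. inner (x - w) u = 0)" for w
  proof -
    have d: "w - y \<in> S" using w ex assms by (simp add: subspace_diff)
    have "inner (x - y) (w - y) - inner (x - w) (w - y) = 0" using d w ex by simp
    moreover have "inner (x - y) (w - y) - inner (x - w) (w - y) = inner ((x - y) - (x - w)) (w - y)"
      by (simp only: inner_diff_left)
    moreover have "(x - y) - (x - w) = w - y" by simp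
    ultimately have "inner (w - y) (w - y) = 0" by simp
    then show ?thesis by simp
  qed
  have "orth_proj S x = y" unfolding orth_proj_def
    by (rule the_equality[where P="\<lambda>w. w \<in> S \<and> (\<forall>u\<in>S. inner (x - w) u = 0)", OF ex uniq])
  then show "orth_proj S x \<in> S" and "\<And>u. u \<in> S \<Longrightarrow> inner (x - orth_proj S x) u = 0"
    using ex by auto
qed



lemma real_key:
  fixes p q L \<mu> c s y Qx :: real
  assumes p: "p > 0" and q: "q \<ge> 0" and L: "L > 0" and mu: "\<mu> > 0" and cond: "\<mu> * q \<le> L * p"
    and c: "c \<ge> 0" and s: "s \<ge> 0"
    and y: "\<bar>y\<bar> \<le> sqrt p * c + sqrt q * s" and Q: "Qx \<ge> L * c^2 - \<mu> * s^2"
    and r_def: "r = sqrt (L * q / (\<mu> * p))"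
    and T_def: "T = \<mu> * p * (1 + r)^2 / (L + \<mu>)"
    and t_def: "t = (p * r + p - T) / L"
  shows "t \<ge> 0 \<and> y^2 - t * Qx \<le> T * (c^2 + s^2)"
proof -
  define a where "a = sqrt p"
  define k where "k = sqrt (\<mu> / L)"
  have a0: "a > 0" using p by (simp add: a_def)
  have k0: "k > 0" using L mu by (simp add: k_def)
  have r0: "r \<ge> 0" unfolding r_def using L q mu p by simp
  have pa: "p = a^2" using p by (simp add: a_def)
  have muk: "\<mu> = L * k^2" using L mu by (simp add: k_def)
  have r2: "r^2 = L * q / (\<mu> * p)" using r_def L q mu p by simp
  have qk: "q = k^2 * a^2 * r^2"
    using r2 muk pa L a0 k0 by (simp add: field_simps)
  have sq: "sqrt q = k * a * r"
  proof -
    have "sqrt q = sqrt ((k * a * r)^2)" using qk by (simp add: power_mult_distrib)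
    then show ?thesis using k0 a0 r0 by simp
  qed
  have Tk: "T * (1 + k^2) = k^2 * a^2 * (1 + r)^2"
  proof -
    have Lm: "L + \<mu> > 0" using L mu by simp
    have "T * (L + \<mu>) = \<mu> * p * (1 + r)^2" using T_def Lm by simp
    then have "L * (T * (1 + k^2)) = L * (k^2 * a^2 * (1 + r)^2)" using muk pa by (simp add: algebra_simps)
    then show ?thesis using L by simp
  qed
  have U: "t * L = a^2 * r + a^2 - T" using t_def L pa by simp
  have kr: "k^2 * r \<le> 1"
  proof -
    have "(k^2 * r)^2 = \<mu> * q / (L * p)"
      using muk r2 L mu p by (simp add: power_mult_distrib field_simps power2_eq_square)
    also have "\<dots> \<le> 1" using cond L p by simp
    finally have "(k^2 * r)^2 \<le> 1^2" by simp
    then show ?thesis by (rule power2_le_imp_le) simp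
  qed
  have t0: "t \<ge> 0"
  proof -
    have "k^2 * (1 + r) \<le> 1 + k^2" using kr by (simp add: algebra_simps)
    then have "(a^2 * (1 + r)) * (k^2 * (1 + r)) \<le> (a^2 * (1 + r)) * (1 + k^2)"
      using r0 by (intro mult_left_mono) auto
    then have "T * (1 + k^2) \<le> (a^2 * r + a^2) * (1 + k^2)"
      using Tk by (simp add: power2_eq_square algebra_simps)
    moreover have "1 + k^2 > 0" by (simp add: add_pos_nonneg)
    ultimately have "T \<le> a^2 * r + a^2" by simp
    then have "t * L \<ge> 0" using U by simp
    then show ?thesis using L by (simp add: zero_le_mult_iff)
  qed
  have y2: "y^2 \<le> (a * c + k * a * r * s)^2"
  proof -
    have "\<bar>y\<bar> \<le> a * c + k * a * r * s" using y sq a_def by simp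
    then show ?thesis by (metis abs_ge_zero abs_le_square_iff order.trans abs_of_nonneg power2_abs)
  qed
  have tq: "t * Qx \<ge> (t * L) * c^2 - (t * L) * k^2 * s^2"
  proof -
    have "t * (L * c^2 - \<mu> * s^2) \<le> t * Qx" using t0 Q by (simp add: mult_left_mono)
    then show ?thesis using muk by (simp add: algebra_simps)
  qed
  have ident: "T * (c^2 + s^2) - ((a * c + k * a * r * s)^2 - (t * L) * c^2 + (t * L) * k^2 * s^2)
      = a^2 * r * (c - k * s)^2 + s^2 * (T * (1 + k^2) - k^2 * a^2 * (1 + r)^2)"
    unfolding U by (simp add: power2_eq_square algebra_simps)
  have "a^2 * r * (c - k * s)^2 \<ge> 0" using r0 by simp
  then have "T * (c^2 + s^2) - ((a * c + k * a * r * s)^2 - (t * L) * c^2 + (t * L) * k^2 * s^2) \<ge> 0"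
    using ident Tk by simp
  then show ?thesis using t0 y2 tq by linarith
qed



lemma quad_sum:
  fixes M :: "real^'n^'n"
  shows "inner x (M *v x) = (\<Sum>i\<in>UNIV. \<Sum>j\<in>UNIV. x$i * M$i$j * x$j)"
  by (simp add: inner_vec_def matrix_vector_mult_def sum_distrib_left mult.assoc)

lemma mv_axis: fixes M :: "real^'n^'n" shows "(M *v axis j b) $ i = M$i$j * b"
  by (simp add: matrix_vector_mult_def axis_def if_distrib[of "\<lambda>z. M$i$_ * z"] cong: if_cong)

lemma inner_axis_mv: fixes M :: "real^'n^'n" shows "inner (axis i a) (M *v axis j b) = a * M$i$j * b"
  by (simp add: inner_axis' mv_axis)

lemma axis2_quad:
  fixes M :: "real^'n^'n"
  shows "inner (axis i a + axis j b) (M *v (axis i a + axis j b)) = a * M$i$i * a + a * M$i$j * b + b * M$j$i * a + b * M$j$j * b"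
  by (simp add: matrix_vector_right_distrib inner_add_left inner_add_right inner_axis_mv)

lemma axis2_norm:
  assumes "i \<noteq> j"
  shows "inner (axis i a + axis j b :: real^'n) (axis i a + axis j b) = a * a + b * b"
  using assms by (simp add: inner_add_left inner_add_right inner_axis_axis)

lemma J_mv: "((\<chi> i j. 1) :: real^'n^'n) *v x = (inner (vec 1) x) *\<^sub>R (vec 1 :: real^'n)"
  by (simp add: vec_eq_iff matrix_vector_mult_def inner_vec_def)

lemma vec1_inner_self: "inner (vec 1 :: real^'n) (vec 1) = real CARD('n)"
  by (simp add: inner_vec_def)

theorem corollary2:
  fixes E :: "'n::finite \<Rightarrow> 'n \<Rightarrow> bool"
  assumes sym: "\<forall>i j. E i j \<longleftrightarrow> E j i"
    and irrefl: "\<forall>i. \<not> E i i"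
    and edge: "\<exists>i j. E i j"
    and cond: "- lambda_min (adj_matrix E) * (real CARD('n)
                 - inner (vec 1) (orth_proj (eigenspace (adj_matrix E) (lambda_max (adj_matrix E))) (vec 1)))
               / (lambda_max (adj_matrix E)
                 * inner (vec 1) (orth_proj (eigenspace (adj_matrix E) (lambda_max (adj_matrix E))) (vec 1)))
               \<le> 1"
  shows "let A = adj_matrix E; l1 = lambda_max A; ln = lambda_min A; n = real CARD('n);
             p = inner (vec 1 :: real^'n) (orth_proj (eigenspace A l1) (vec 1))
         in lovasz_theta E \<le> (- n * ln / (l1 - ln)) * (p / n)
              * (1 + sqrt (l1 * (n - p) / (- ln * p)))\<^sup>2"
proof -
  define A where "A = adj_matrix E"
  define L where "L = lambda_max A"
  define ln where "ln = lambda_min A"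
  define n where "n = real CARD('n)"
  define E1 where "E1 = eigenspace A L"
  define w where "w = orth_proj E1 (vec 1)"
  define p where "p = inner (vec 1 :: real^'n) w"
  define q where "q = n - p"
  define \<mu> where "\<mu> = - ln"
  define b where "b = (vec 1 :: real^'n) - w"
  have Aij: "A $ i $ j = (if E i j then 1 else 0)" for i j unfolding A_def adj_matrix_def by simp
  have symA: "transpose A = A" using sym unfolding transpose_def by (simp add: vec_eq_iff Aij)
  obtain i0 j0 where e0: "E i0 j0" using edge by blast
  have ij0: "i0 \<noteq> j0" using e0 irrefl by blast
  have L1: "L \<ge> 1"
  proof -
    have "inner (axis i0 1 + axis j0 1) (A *v (axis i0 1 + axis j0 1)) \<le> L * inner (axis i0 1 + axis j0 1) (axis i0 1 + axis j0 1 :: real^'n)"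
      unfolding L_def by (rule sym_max(2)[OF symA])
    then have "2 \<le> L * 2" unfolding axis2_quad axis2_norm[OF ij0] using e0 sym irrefl by (simp add: Aij)
    then show ?thesis by simp
  qed
  have ln1: "ln \<le> -1"
  proof -
    have "ln * inner (axis i0 1 + axis j0 (-1)) (axis i0 1 + axis j0 (-1) :: real^'n) \<le> inner (axis i0 1 + axis j0 (-1)) (A *v (axis i0 1 + axis j0 (-1)))"
      unfolding ln_def by (rule sym_min(2)[OF symA])
    then have "ln * 2 \<le> -2" unfolding axis2_quad axis2_norm[OF ij0] using e0 sym irrefl by (simp add: Aij)
    then show ?thesis by simp
  qed
  have subE1: "subspace E1" unfolding subspace_def E1_def eigenspace_def
    by (simp add: matrix_vector_right_distrib scaleR_add_right matrix_vector_mult_scaleR)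
  have wE1: "w \<in> E1" unfolding w_def by (rule orth_proj_props(1)[OF subE1])
  have bperp: "inner b u = 0" if "u \<in> E1" for u unfolding b_def w_def using orth_proj_props(2)[OF subE1 that] .
  have E1eig: "A *v u = L *\<^sub>R u" if "u \<in> E1" for u using that unfolding E1_def eigenspace_def by simp
  have pw: "p = inner w w"
  proof -
    have "p = inner (b + w) w" unfolding p_def b_def by simp
    also have "\<dots> = inner w w" using bperp[OF wE1] by (simp add: inner_add_left)
    finally show ?thesis .
  qed
  have qb: "q = inner b b"
  proof -
    have "inner b b = inner b (vec 1) - inner b w" unfolding b_def[of] by (simp add: inner_diff_right)
    also have "\<dots> = inner b (vec 1)" using bperp[OF wE1] by simp
    also have "\<dots> = inner (vec 1 :: real^'n) (vec 1) - inner w (vec 1)" unfolding b_def by (simp add: inner_diff_left)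
    also have "\<dots> = n - p" unfolding n_def p_def vec1_inner_self by (simp add: inner_commute)
    finally show ?thesis unfolding q_def by simp
  qed
  have ppos: "p > 0"
  proof -
    obtain v where v: "norm v = 1" "A *v v = L *\<^sub>R v" using sym_max(1)[OF symA] unfolding L_def by blast
    define u where "u = (\<chi> k. \<bar>v $ k\<bar>)"
    have vv: "inner v v = 1" using v(1) by (simp add: norm_eq_1)
    have uu: "inner u u = inner v v" unfolding u_def by (simp add: inner_vec_def abs_mult_self_eq)
    have Anonneg: "A $ i $ j \<ge> 0" for i j by (simp add: Aij)
    have "inner v (A *v v) \<le> inner u (A *v u)"
      unfolding quad_sum
    proof (intro sum_mono)
      fix i j
      have "v$i * A$i$j * v$j \<le> \<bar>v$i * A$i$j * v$j\<bar>" by (rule abs_ge_self)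
      also have "\<dots> = u$i * A$i$j * u$j" unfolding u_def using Anonneg[of i j] by (simp add: abs_mult)
      finally show "v$i * A$i$j * v$j \<le> u$i * A$i$j * u$j" .
    qed
    moreover have "inner v (A *v v) = L" using v(2) vv by simp
    ultimately have ge: "L * inner u u \<le> inner u (A *v u)" using uu vv by simp
    have le: "inner x (A *v x) \<le> L * inner x x" for x unfolding L_def by (rule sym_max(2)[OF symA])
    have "A *v u = L *\<^sub>R u"
      by (rule maximizer_eigen[OF symA le]) (use ge le[of u] in linarith)
    then have uE1: "u \<in> E1" unfolding E1_def eigenspace_def by simp
    have "v \<noteq> 0" using v(1) by auto
    then obtain k where k: "v $ k \<noteq> 0" by (auto simp: vec_eq_iff)
    have "inner (vec 1 :: real^'n) u = (\<Sum>i\<in>UNIV. \<bar>v $ i\<bar>)" unfolding u_def by (simp add: inner_vec_def)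
    also have "\<dots> \<ge> \<bar>v $ k\<bar>" by (rule member_le_sum) auto
    finally have pos: "inner (vec 1 :: real^'n) u > 0" using k by simp
    have "inner (vec 1 :: real^'n) u = inner b u + inner w u" unfolding b_def by (simp add: inner_diff_left)
    then have "inner w u > 0" using pos bperp[OF uE1] by simp
    then have "w \<noteq> 0" by auto
    then show ?thesis using pw by simp
  qed
  have Lpos: "L > 0" using L1 by simp
  have mupos: "\<mu> > 0" using ln1 unfolding \<mu>_def by simp
  have qnn: "q \<ge> 0" using qb by simp
  have cond': "\<mu> * q \<le> L * p"
  proof -
    have "\<mu> * q / (L * p) \<le> 1"
      using cond unfolding \<mu>_def q_def p_def w_def E1_def L_def ln_def A_def n_def by simp
    moreover have "L * p > 0" using Lpos ppos by simp
    ultimately show ?thesis by (simp add: pos_divide_le_eq)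
  qed
  define r where "r = sqrt (L * q / (\<mu> * p))"
  define T where "T = \<mu> * p * (1 + r)^2 / (L + \<mu>)"
  define t where "t = (p * r + p - T) / L"
  have t0: "t \<ge> 0"
    using real_key[OF ppos qnn Lpos mupos cond' order.refl order.refl _ _ r_def T_def t_def, of 0 "L * 0^2 - \<mu> * 0^2"]
    by simp
  define B where "B = ((\<chi> i j. 1) :: real^'n^'n) - t *\<^sub>R A"
  have Bmv: "B *v x = inner (vec 1) x *\<^sub>R vec 1 - t *\<^sub>R (A *v x)" for x
    unfolding B_def by (simp add: matrix_vector_mult_diff_rdistrib J_mv scaleR_matrix_vector_assoc)
  have key: "inner x (B *v x) \<le> T * inner x x" for x
  proof -
    define x1 where "x1 = orth_proj E1 x"
    define x2 where "x2 = x - x1"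
    have x1E: "x1 \<in> E1" unfolding x1_def by (rule orth_proj_props(1)[OF subE1])
    have x2perp: "inner x2 u = 0" if "u \<in> E1" for u
      unfolding x2_def x1_def using orth_proj_props(2)[OF subE1 that] .
    have xs: "x = x1 + x2" unfolding x2_def by simp
    have Ax1: "A *v x1 = L *\<^sub>R x1" by (rule E1eig[OF x1E])
    have o12: "inner x1 x2 = 0" using x2perp[OF x1E] by (simp add: inner_commute)
    define c where "c = norm x1"
    define s where "s = norm x2"
    have cc: "inner x1 x1 = c^2" unfolding c_def by (simp add: power2_norm_eq_inner)
    have ss: "inner x2 x2 = s^2" unfolding s_def by (simp add: power2_norm_eq_inner)
    have xx: "inner x x = c^2 + s^2" unfolding xs using o12 cc ss
      by (simp add: inner_add_left inner_add_right inner_commute[of x2 x1])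
    have a12: "inner x1 (A *v x2) = 0"
    proof -
      have "inner x1 (A *v x2) = inner (A *v x1) x2" by (rule sym_inner[OF symA, symmetric])
      then show ?thesis using Ax1 o12 by simp
    qed
    have a21: "inner x2 (A *v x1) = 0" using Ax1 o12 by (simp add: inner_commute)
    have Qx: "inner x (A *v x) = L * c^2 + inner x2 (A *v x2)"
      unfolding xs using a12 a21 Ax1 cc
      by (simp add: matrix_vector_right_distrib inner_add_left inner_add_right)
    have x2low: "ln * inner x2 x2 \<le> inner x2 (A *v x2)" unfolding ln_def by (rule sym_min(2)[OF symA])
    have Qlow: "inner x (A *v x) \<ge> L * c^2 - \<mu> * s^2" using Qx x2low ss unfolding \<mu>_def by simp
    have yeq: "inner (vec 1) x = inner w x1 + inner b x2"
    proof -
      have "inner (vec 1 :: real^'n) x = inner (w + b) (x1 + x2)" unfolding b_def xs by simp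
      also have "\<dots> = inner w x1 + inner w x2 + inner b x1 + inner b x2" by (simp add: inner_add_left inner_add_right)
      also have "inner w x2 = 0" using x2perp[OF wE1] by (simp add: inner_commute)
      also have "inner b x1 = 0" using bperp[OF x1E] .
      finally show ?thesis by simp
    qed
    have nw: "norm w = sqrt p" using pw by (simp add: norm_eq_sqrt_inner)
    have nb: "norm b = sqrt q" using qb by (simp add: norm_eq_sqrt_inner)
    have "\<bar>inner w x1\<bar> \<le> sqrt p * c" using Cauchy_Schwarz_ineq2[of w x1] nw c_def by simp
    moreover have "\<bar>inner b x2\<bar> \<le> sqrt q * s" using Cauchy_Schwarz_ineq2[of b x2] nb s_def by simp
    ultimately have ybound: "\<bar>inner (vec 1) x\<bar> \<le> sqrt p * c + sqrt q * s" unfolding yeq by linarith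
    have kk: "(inner (vec 1) x)^2 - t * inner x (A *v x) \<le> T * (c^2 + s^2)"
      using real_key[OF ppos qnn Lpos mupos cond' _ _ ybound Qlow r_def T_def t_def] c_def s_def by simp
    have "inner x (B *v x) = (inner (vec 1) x)^2 - t * inner x (A *v x)"
      unfolding Bmv by (simp add: inner_diff_right power2_eq_square inner_commute)
    then show ?thesis using kk xx by simp
  qed
  have symB: "transpose B = B" unfolding B_def using symA
    by (simp add: transpose_def vec_eq_iff)
  have feas: "B \<in> {B :: real^'n^'n. transpose B = B \<and> (\<forall>i j. (i = j \<or> \<not> E i j) \<longrightarrow> B $ i $ j = 1)}"
    using symB irrefl by (auto simp: B_def Aij)
  have bdd: "bdd_below (lambda_max ` {B :: real^'n^'n. transpose B = B \<and> (\<forall>i j. (i = j \<or> \<not> E i j) \<longrightarrow> B $ i $ j = 1)})"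
  proof (rule bdd_belowI2)
    fix B' :: "real^'n^'n" assume B': "B' \<in> {B :: real^'n^'n. transpose B = B \<and> (\<forall>i j. (i = j \<or> \<not> E i j) \<longrightarrow> B $ i $ j = 1)}"
    have "inner (axis i0 1) (B' *v axis i0 1) \<le> lambda_max B' * inner (axis i0 1) (axis i0 1 :: real^'n)"
      using B' by (intro sym_max(2)) auto
    then show "1 \<le> lambda_max B'" using B' by (simp add: inner_axis_mv inner_axis_axis)
  qed
  have th1: "lovasz_theta E \<le> lambda_max B"
    unfolding lovasz_theta_def by (rule cInf_lower[OF imageI[OF feas] bdd])
  have th2: "lambda_max B \<le> T"
  proof -
    obtain v where v: "norm v = 1" "B *v v = lambda_max B *\<^sub>R v" using sym_max(1)[OF symB] by blast
    have vv: "inner v v = 1" using v(1) by (simp add: norm_eq_1)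
    have "lambda_max B = inner v (B *v v)" using v(2) vv by simp
    also have "\<dots> \<le> T" using key[of v] vv by simp
    finally show ?thesis .
  qed
  have npos: "n > 0" unfolding n_def by simp
  have "(- n * ln / (L - ln)) * (p / n) * (1 + sqrt (L * (n - p) / (- ln * p)))\<^sup>2 = T"
    unfolding T_def r_def q_def \<mu>_def using npos by (simp add: field_simps)
  then show ?thesis using th1 th2
    unfolding Let_def A_def[symmetric] L_def[symmetric] ln_def[symmetric] n_def[symmetric] E1_def[symmetric]
      w_def[symmetric] p_def[symmetric] by simp
qed

end
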